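(* Let $H$ be a real symmetric positive definite $d\times d$ matrix and $L$ a real $d\times d$ matrix with $L^TH+HL=0$. Let $s>4$ be even and consider the $s$-stage explicit Runge–Kutta method applied to $\frac{d}{dt}u=Lu$, $u_{n+1}=G_s u_n$ with $G_s=\sum_{k=0}^s a_k(hL)^k$, $a_0=1$, where $a_k=\frac{1}{k!}$ for $k=1,\dots,s-2$, $a_{s-1}=\frac{3}{(s+2)!}-\frac{3}{(s+1)!}+\frac{1}{(s-1)!}$, and $a_s=\frac{3}{(s+2)!}-\frac{3}{(s+1)!}+\frac{1}{s!}$. Then the method has order $p=s-2$ and order of energy accuracy $r=s+3$.
   Context: The order $p$ of the method is the largest integer such that $a_k=1/k!$ for all $1\le k\le p$. For $0\le k\le s$, $b_k=\sum_{i=\max(0,2k-s)}^{\min(2k,s)}(-1)^{k+i}a_i a_{2k-i}$, so that the energy $\mathcal{E}=\tfrac12\langle u,Hu\rangle$ satisfies $\mathcal{E}_{n+1}=\mathcal{E}_n+\tfrac12\sum_{k=1}^s b_k h^{2k}\|L^k u_n\|_H^2$. The leading index $m$ is the smallest $k\ge1$ with $b_k\ne0$ and the order of energy accuracy is $r=2m-1$. *)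

theory Defs
  imports "HOL-Analysis.Analysis"
begin

text \<open>Order p of an s-stage method with stability polynomial coefficients a_0..a_s:
  the largest p (with p \<le> s, since only a_0..a_s are defined) such that a_k = 1/k! for 1 \<le> k \<le> p.\<close>
definition rk_order :: "(nat \<Rightarrow> real) \<Rightarrow> nat \<Rightarrow> nat" where
  "rk_order a s = (GREATEST p. p \<le> s \<and> (\<forall>k\<in>{1..p}. a k = 1 / fact k))"

definition energy_coeff :: "(nat \<Rightarrow> real) \<Rightarrow> nat \<Rightarrow> nat \<Rightarrow> real" where
  "energy_coeff a s k =
     (\<Sum>i = max 0 (2*k - s) .. min (2*k) s. (-1) ^ (k + i) * a i * a (2*k - i))"

definition energy_leading_index :: "(nat \<Rightarrow> real) \<Rightarrow> nat \<Rightarrow> nat" where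
  "energy_leading_index a s = (LEAST k. 1 \<le> k \<and> k \<le> s \<and> energy_coeff a s k \<noteq> 0)"

definition energy_order :: "(nat \<Rightarrow> real) \<Rightarrow> nat \<Rightarrow> nat" where
  "energy_order a s = 2 * energy_leading_index a s - 1"

definition prop4_coeff :: "nat \<Rightarrow> nat \<Rightarrow> real" where
  "prop4_coeff s k =
     (if k = 0 then 1
      else if k \<le> s - 2 then 1 / fact k
      else if k = s - 1 then 3 / fact (s + 2) - 3 / fact (s + 1) + 1 / fact (s - 1)
      else if k = s then 3 / fact (s + 2) - 3 / fact (s + 1) + 1 / fact s
      else 0)"

end

theory Submission
  imports Defs
begin

lemma alt_fact:
  assumes "m > 0"
  shows "(\<Sum>i=0..m. (-1)^i * (1 / fact i) * (1 / fact (m - i)) :: real) = 0"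
proof -
  have "(\<Sum>i=0..m. (-1)^i * (1 / fact i) * (1 / fact (m - i)) :: real)
      = (\<Sum>i\<le>m. (-1)^i * of_nat (m choose i)) / fact m"
    unfolding sum_divide_distrib atLeast0AtMost
    by (intro sum.cong refl) (simp add: binomial_fact field_simps)
  also have "\<dots> = 0" using choose_alternating_sum[OF assms] by simp
  finally show ?thesis .
qed

lemma coeff_low: "i \<le> s - 2 \<Longrightarrow> prop4_coeff s i = 1 / fact i"
  by (simp add: prop4_coeff_def)

lemma coeff_high: "s > 4 \<Longrightarrow> i > s \<Longrightarrow> prop4_coeff s i = 0"
proof -
  assume "s > 4" "i > s"
  then have "\<not> i \<le> s - 2" "i \<noteq> s - 1" "i \<noteq> s" "i \<noteq> 0" by auto
  then show ?thesis by (simp add: prop4_coeff_def)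
qed

lemma full_sum:
  assumes "s > 4" "k \<le> s"
  shows "energy_coeff (prop4_coeff s) s k =
    (\<Sum>i=0..2*k. (-1)^(k+i) * prop4_coeff s i * prop4_coeff s (2*k-i))"
  unfolding energy_coeff_def
  by (rule sym, rule sum.mono_neutral_right) (auto simp: coeff_high assms)

definition ee :: "nat \<Rightarrow> nat \<Rightarrow> real" where
  "ee s i = prop4_coeff s i - 1 / fact i"

lemma ee_low: "i \<le> s - 2 \<Longrightarrow> ee s i = 0"
  by (simp add: ee_def coeff_low)

lemma decomp:
  assumes "s > 4" "even m" "m \<le> 2 * s - 4" "m > 0"
  shows "(\<Sum>i=0..m. (-1)^(k+i) * prop4_coeff s i * prop4_coeff s (m-i)) =
     (-1)^k * 2 * (\<Sum>i=0..m. (-1)^i * (1 / fact i) * ee s (m - i))"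
proof -
  have split: "prop4_coeff s i * prop4_coeff s (m-i) =
     (1/fact i) * (1/fact (m-i)) + (1/fact i) * ee s (m-i) + ee s i * (1/fact (m-i))"
    if "i \<le> m" for i
  proof -
    have "ee s i * ee s (m-i) = 0"
      using that assms by (cases "i \<le> s - 2") (auto simp: ee_low)
    then show ?thesis unfolding ee_def by (simp add: algebra_simps)
  qed
  have rev: "(\<Sum>i=0..m. (-1)^i * ee s i * (1/fact (m-i))) =
      (\<Sum>i=0..m. (-1)^i * (1 / fact i) * ee s (m - i))"
  proof -
    have "(\<Sum>i=0..m. (-1)^i * ee s i * (1/fact (m-i))) =
       (\<Sum>i=0..m. (-1)^(m-i) * ee s (m-i) * (1/fact (m-(m-i))) :: real)"
      by (subst sum.atLeastAtMost_rev) simp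
    also have "\<dots> = (\<Sum>i=0..m. (-1)^i * (1 / fact i) * ee s (m - i))"
    proof (intro sum.cong refl)
      fix i assume "i \<in> {0..m}"
      then have "i \<le> m" by simp
      have "(-1::real)^(m-i) = (-1)^i"
        using \<open>i \<le> m\<close> \<open>even m\<close>
        by (metis add_diff_cancel_left' even_add le_add_diff_inverse neg_one_even_power neg_one_odd_power)
      then show "(-1)^(m-i) * ee s (m-i) * (1/fact (m-(m-i))) = (-1)^i * (1 / fact i) * ee s (m - i)"
        using \<open>i \<le> m\<close> by simp
    qed
    finally show ?thesis .
  qed
  have "(\<Sum>i=0..m. (-1)^(k+i) * prop4_coeff s i * prop4_coeff s (m-i)) =
     (-1)^k * ((\<Sum>i=0..m. (-1)^i * (1/fact i) * (1/fact (m-i))) +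
       (\<Sum>i=0..m. (-1)^i * (1/fact i) * ee s (m-i)) + (\<Sum>i=0..m. (-1)^i * ee s i * (1/fact (m-i))))"
    unfolding sum_distrib_left sum.distrib[symmetric]
  proof (intro sum.cong refl)
    fix i assume "i \<in> {0..m}"
    then have "i \<le> m" by simp
    show "(-1)^(k+i) * prop4_coeff s i * prop4_coeff s (m-i) =
       (-1)^k * ((-1)^i * (1/fact i) * (1/fact (m-i)) + (-1)^i * (1/fact i) * ee s (m-i) +
        (-1)^i * ee s i * (1/fact (m-i)))"
    proof -
      have "(-1)^(k+i) * prop4_coeff s i * prop4_coeff s (m-i) =
         (-1)^k * (-1)^i * (prop4_coeff s i * prop4_coeff s (m-i))" by (simp add: power_add)
      also have "\<dots> = (-1)^k * (-1)^i * ((1/fact i) * (1/fact (m-i)) + (1/fact i) * ee s (m-i) + ee s i * (1/fact (m-i)))"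
        by (simp only: split[OF \<open>i \<le> m\<close>])
      also have "\<dots> = (-1)^k * ((-1)^i * (1/fact i) * (1/fact (m-i)) + (-1)^i * (1/fact i) * ee s (m-i) +
        (-1)^i * ee s i * (1/fact (m-i)))" by (simp add: algebra_simps)
      finally show ?thesis .
    qed
  qed
  then show ?thesis using alt_fact[OF assms(4)] rev by simp
qed

definition TT :: "nat \<Rightarrow> nat \<Rightarrow> real" where
  "TT s m = (\<Sum>i=0..m. (-1)^i * (1 / fact i) * ee s (m - i))"

lemma TT_low: "m \<le> s - 2 \<Longrightarrow> TT s m = 0"
  unfolding TT_def by (intro sum.neutral) (auto simp: ee_low)

lemma TT_restrict:
  assumes "s > 4" "s + j = m + 1"
  shows "TT s m = (\<Sum>i=0..j. (-1)^i * (1 / fact i) * ee s (m - i))"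
  unfolding TT_def
proof (rule sum.mono_neutral_right)
  show "{0..j} \<subseteq> {0..m}" using assms by auto
  show "\<forall>i\<in>{0..m} - {0..j}. (-1)^i * (1 / fact i) * ee s (m - i) = 0"
  proof
    fix i assume "i \<in> {0..m} - {0..j}"
    then have "m - i \<le> s - 2" using assms by auto
    then show "(-1)^i * (1 / fact i) * ee s (m - i) = 0" by (simp add: ee_low)
  qed
qed simp

lemma ee_vals:
  assumes "s > 4"
  shows "ee s (s - 1) = 3 / fact (s + 2) - 3 / fact (s + 1)"
    "ee s s = 3 / fact (s + 2) - 3 / fact (s + 1)"
    "r > 0 \<Longrightarrow> ee s (s + r) = - 1 / fact (s + r)"
  using assms by (auto simp: ee_def prop4_coeff_def)

lemma TT0: assumes "s > 4" shows "TT s s = 0"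
proof -
  have "TT s s = (\<Sum>i=0..1. (-1)^i * (1 / fact i) * ee s (s - i))"
    by (rule TT_restrict) (use assms in auto)
  then show ?thesis using ee_vals[OF assms] by simp
qed

lemma TT1: assumes "s > 4" shows "TT s (s+2) = 0"
proof -
  have "TT s (s+2) = (\<Sum>i=0..3. (-1)^i * (1 / fact i) * ee s (s + 2 - i))"
    by (rule TT_restrict) (use assms in auto)
  also have "\<dots> = ee s (s+2) - ee s (s+1) + ee s s / 2 - ee s (s - 1) / 6"
    by (simp add: numeral_eq_Suc fact_numeral)
  also have "\<dots> = 0"
  proof -
    have f1: "fact (s+1) = (real s + 1) * fact s" by simp
    have f2: "fact (s+2) = (real s + 2) * (real s + 1) * fact s" by (simp add: algebra_simps)
    have "fact s > (0::real)" by simp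
    then show ?thesis using ee_vals(1,2)[OF assms] ee_vals(3)[OF assms, of 1] ee_vals(3)[OF assms, of 2] f1 f2
      by (simp add: field_simps)
  qed
  finally show ?thesis .
qed

lemma alg:
  fixes x f :: real
  assumes "x \<ge> 0" "f > 0"
  shows "-1 / ((x + 4) * (x + 3) * (x + 2) * (x + 1) * f) - -1 / ((x + 3) * (x + 2) * (x + 1) * f)
     + -1 / ((x + 2) * (x + 1) * f) / 2 - -1 / ((x + 1) * f) / 6
     + (3 / ((x + 2) * (x + 1) * f) - 3 / ((x + 1) * f)) / 24
     - (3 / ((x + 2) * (x + 1) * f) - 3 / ((x + 1) * f)) / 120
   = (x + 3) * ((x + 4) * (2 * x - 8) + 30) / 30 / ((x + 4) * (x + 3) * (x + 2) * (x + 1) * f)"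
proof -
  have "x + 1 \<noteq> 0" "x + 2 \<noteq> 0" "x + 3 \<noteq> 0" "x + 4 \<noteq> 0" "f \<noteq> 0" using assms by auto
  then show ?thesis by (simp add: divide_simps) (simp add: algebra_simps)
qed

lemma TT2: assumes "s > 4" shows "TT s (s+4) > 0"
proof -
  have "TT s (s+4) = (\<Sum>i=0..5. (-1)^i * (1 / fact i) * ee s (s + 4 - i))"
    by (rule TT_restrict) (use assms in auto)
  also have "\<dots> = ee s (s+4) - ee s (s+3) + ee s (s+2) / 2 - ee s (s+1) / 6 + ee s s / 24 - ee s (s - 1) / 120"
    by (simp add: numeral_eq_Suc fact_numeral)
  also have "\<dots> = (real s + 3) * ((real s + 4) * (2 * real s - 8) + 30) / 30 /
      ((real s + 4) * (real s + 3) * (real s + 2) * (real s + 1) * fact s)"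
  proof -
    have f1: "fact (s+1) = (real s + 1) * fact s" by simp
    have f2: "fact (s+2) = (real s + 2) * (real s + 1) * fact s" by (simp add: algebra_simps)
    have f3: "fact (s+3) = (real s + 3) * (real s + 2) * (real s + 1) * fact s"
      by (simp add: algebra_simps numeral_3_eq_3)
    have f4: "fact (s+4) = (real s + 4) * (real s + 3) * (real s + 2) * (real s + 1) * fact s"
      using f3 by (simp add: algebra_simps numeral_eq_Suc)
    have "fact s > (0::real)" by simp
    have a: "3 / fact (s + 2) - 3 / fact (s + 1) = 3 / ((real s + 2) * (real s + 1) * fact s) - 3 / ((real s + 1) * fact s)"
      by (simp only: f1 f2)
    have e0: "ee s (s-1) = 3 / ((real s + 2) * (real s + 1) * fact s) - 3 / ((real s + 1) * fact s)"
      using ee_vals(1)[OF assms] a by simp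
    have e00: "ee s s = 3 / ((real s + 2) * (real s + 1) * fact s) - 3 / ((real s + 1) * fact s)"
      using ee_vals(2)[OF assms] a by simp
    have e1: "ee s (s+1) = -1 / ((real s + 1) * fact s)"
      using ee_vals(3)[OF assms, of 1] f1 by simp
    have e2: "ee s (s+2) = -1 / ((real s + 2) * (real s + 1) * fact s)"
      using ee_vals(3)[OF assms, of 2] f2 by simp
    have e3: "ee s (s+3) = -1 / ((real s + 3) * (real s + 2) * (real s + 1) * fact s)"
      using ee_vals(3)[OF assms, of 3] f3 by simp
    have e4: "ee s (s+4) = -1 / ((real s + 4) * (real s + 3) * (real s + 2) * (real s + 1) * fact s)"
      using ee_vals(3)[OF assms, of 4] f4 by simp
    show ?thesis unfolding e0 e00 e1 e2 e3 e4
      by (rule alg) (use \<open>fact s > 0\<close> in auto)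
  qed
  also have "\<dots> > 0"
  proof -
    have "2 * real s - 8 > 0" using assms by simp
    then have "(real s + 4) * (2 * real s - 8) > 0" by simp
    then have "(real s + 4) * (2 * real s - 8) + 30 > 0" by linarith
    then show ?thesis using assms by (intro divide_pos_pos mult_pos_pos) auto
  qed
  finally show ?thesis .
qed

lemma alpha_nz: "3 / fact (s + 2) - 3 / fact (s + 1) \<noteq> (0::real)"
proof -
  have "fact (s + 2) = (real s + 2) * fact (s + 1)" by simp
  moreover have "fact (s + 1) > (0::real)" by simp
  ultimately have "fact (s + 2) > (fact (s + 1) :: real)" by simp
  then have "3 / fact (s + 2) < (3 / fact (s + 1) :: real)"
    by (intro divide_strict_left_mono) auto
  then show ?thesis by simp
qed

lemma rk: assumes "s > 4" shows "rk_order (prop4_coeff s) s = s - 2"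
  unfolding rk_order_def
proof (rule Greatest_equality)
  show "s - 2 \<le> s \<and> (\<forall>k\<in>{1..s - 2}. prop4_coeff s k = 1 / fact k)"
    by (auto simp: coeff_low)
  fix y assume y: "y \<le> s \<and> (\<forall>k\<in>{1..y}. prop4_coeff s k = 1 / fact k)"
  show "y \<le> s - 2"
  proof (rule ccontr)
    assume "\<not> y \<le> s - 2"
    then have "s - 1 \<in> {1..y}" using assms by auto
    then have "prop4_coeff s (s - 1) = 1 / fact (s - 1)" using y by blast
    moreover have "prop4_coeff s (s - 1) = 3 / fact (s + 2) - 3 / fact (s + 1) + 1 / fact (s - 1)"
      using assms by (simp add: prop4_coeff_def)
    ultimately show False using alpha_nz[of s] by simp
  qed
qed

lemma energy_big:
  assumes "s \<ge> 8" "1 \<le> k" "k \<le> s - 2"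
  shows "energy_coeff (prop4_coeff s) s k = (-1)^k * 2 * TT s (2 * k)"
proof -
  have "energy_coeff (prop4_coeff s) s k =
    (\<Sum>i=0..2*k. (-1)^(k+i) * prop4_coeff s i * prop4_coeff s (2*k-i))"
    by (rule full_sum) (use assms in auto)
  also have "\<dots> = (-1)^k * 2 * TT s (2 * k)"
    unfolding TT_def by (rule decomp) (use assms in auto)
  finally show ?thesis .
qed

lemma lead_big:
  assumes "s \<ge> 8" "even s"
  shows "energy_leading_index (prop4_coeff s) s = s div 2 + 2"
  unfolding energy_leading_index_def
proof (rule Least_equality)
  have "energy_coeff (prop4_coeff s) s (s div 2 + 2) = (-1)^(s div 2 + 2) * 2 * TT s (s + 4)"
  proof -
    have a: "s div 2 + 2 \<le> s - 2" "2 * (s div 2 + 2) = s + 4" using assms by auto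
    show ?thesis using energy_big[of s "s div 2 + 2", OF assms(1) _ a(1)] unfolding a(2) by simp
  qed
  moreover have "TT s (s + 4) > 0" using TT2[of s] assms by simp
  ultimately show "1 \<le> s div 2 + 2 \<and> s div 2 + 2 \<le> s \<and> energy_coeff (prop4_coeff s) s (s div 2 + 2) \<noteq> 0"
    using assms by auto
  fix y assume y: "1 \<le> y \<and> y \<le> s \<and> energy_coeff (prop4_coeff s) s y \<noteq> 0"
  show "s div 2 + 2 \<le> y"
  proof (rule ccontr)
    assume "\<not> s div 2 + 2 \<le> y"
    then have ys: "y \<le> s div 2 + 1" by simp
    have e: "energy_coeff (prop4_coeff s) s y = (-1)^y * 2 * TT s (2 * y)"
      using energy_big[of s y] assms y ys by auto
    have "TT s (2 * y) = 0"
    proof -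
      consider "2 * y \<le> s - 2" | "2 * y = s" | "2 * y = s + 2" using ys assms by fastforce
      then show ?thesis
      proof cases
        case 1 then show ?thesis by (rule TT_low)
      next
        case 2 then show ?thesis using TT0[of s] assms by simp
      next
        case 3 then show ?thesis using TT1[of s] assms by simp
      qed
    qed
    then show False using e y by simp
  qed
qed

lemma lead_six: "energy_leading_index (prop4_coeff 6) 6 = 5"
  unfolding energy_leading_index_def
proof (rule Least_equality)
  show "1 \<le> (5::nat) \<and> (5::nat) \<le> 6 \<and> energy_coeff (prop4_coeff 6) 6 5 \<noteq> 0"
    by (simp add: energy_coeff_def prop4_coeff_def numeral_eq_Suc sum.atLeast_Suc_atMost fact_numeral)
  fix y :: nat assume y: "1 \<le> y \<and> y \<le> 6 \<and> energy_coeff (prop4_coeff 6) 6 y \<noteq> 0"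
  show "5 \<le> y"
  proof (rule ccontr)
    assume "\<not> 5 \<le> y"
    then have "y = 1 \<or> y = 2 \<or> y = 3 \<or> y = 4" using y by auto
    then show False using y
      by (auto simp: energy_coeff_def prop4_coeff_def numeral_eq_Suc sum.atLeast_Suc_atMost fact_numeral)
  qed
qed

theorem proposition4:
  fixes s :: nat and H L :: "real ^ 'd ^ 'd"
  assumes "even s" and "s > 4"
    and "transpose H = H"
    and "\<forall>x. x \<noteq> 0 \<longrightarrow> x \<bullet> (H *v x) > 0"
    and "transpose L ** H + H ** L = 0"
  shows "rk_order (prop4_coeff s) s = s - 2 \<and> energy_order (prop4_coeff s) s = s + 3"
proof
  show "rk_order (prop4_coeff s) s = s - 2" using rk assms(2) .
  show "energy_order (prop4_coeff s) s = s + 3"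
  proof (cases "s = 6")
    case True then show ?thesis using lead_six by (simp add: energy_order_def)
  next
    case False
    then have "s \<ge> 8" using assms(1,2) by (auto elim!: evenE)
    then show ?thesis using lead_big[of s] assms(1) by (auto simp: energy_order_def elim!: evenE)
  qed
qed

end
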